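(* Let $g\ge 4$ be an even integer. Let $H_g$ be the mixed graph with vertex set $\mathbb{Z}_g\times\{0,1,\dots,g/2-1\}$, edges $\{(i,j),(i+1,j)\}$ for all $i\in\mathbb{Z}_g$ and $0\le j\le g/2-1$, arcs $((i,j),(i,j+1))$ for all $i\in\mathbb{Z}_g$ and $0\le j\le g/2-2$, and arcs $((i,g/2-1),(i+g/2,0))$ for all $i\in\mathbb{Z}_g$ (first coordinates taken modulo $g$). (Equivalently, $H_g$ is the Cartesian product of the undirected cycle $C_g$ with the directed path on $g/2$ vertices, together with the arcs $((i,g/2-1),(i+g/2,0))$.) Then $H_g$ is a $[1,2;g]$-mixed graph of order $\frac{g^2}{2}$.
   Context: A mixed graph is a finite simple graph that may contain both edges and arcs. A $[z,r;g]$-mixed graph is a mixed graph in which every vertex is the tail of exactly $z$ arcs, the head of exactly $z$ arcs, and is incident with exactly $r$ edges, and whose girth is $g$. Walks traverse edges in either direction and arcs only in their direction; a cycle is a closed walk with no repeated vertices (other than start = end) and no repeated edge or arc; the girth is the length of a shortest cycle. *)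

theory Defs
  imports Main
begin

definition mixed_graph :: "'a set \<Rightarrow> 'a set set \<Rightarrow> ('a \<times> 'a) set \<Rightarrow> bool" where
  "mixed_graph V E A \<longleftrightarrow> finite V
     \<and> (\<forall>e\<in>E. e \<subseteq> V \<and> card e = 2)
     \<and> (\<forall>(u,v)\<in>A. u \<in> V \<and> v \<in> V \<and> u \<noteq> v)"

definition mixed_regular :: "'a set \<Rightarrow> 'a set set \<Rightarrow> ('a \<times> 'a) set \<Rightarrow> nat \<Rightarrow> nat \<Rightarrow> bool" where
  "mixed_regular V E A z r \<longleftrightarrow> (\<forall>v\<in>V.
       card {w. (v, w) \<in> A} = z \<and> card {w. (w, v) \<in> A} = z \<and> card {e\<in>E. v \<in> e} = r)"

datatype 'a step = EdgeStep "'a set" | ArcStep "'a \<times> 'a"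

fun step_ok :: "'a set set \<Rightarrow> ('a \<times> 'a) set \<Rightarrow> 'a step \<Rightarrow> 'a \<Rightarrow> 'a \<Rightarrow> bool" where
  "step_ok E A (EdgeStep e) u v \<longleftrightarrow> e \<in> E \<and> e = {u, v}"
| "step_ok E A (ArcStep a) u v \<longleftrightarrow> a \<in> A \<and> a = (u, v)"

definition is_cycle :: "'a set \<Rightarrow> 'a set set \<Rightarrow> ('a \<times> 'a) set \<Rightarrow> 'a list \<Rightarrow> 'a step list \<Rightarrow> bool" where
  "is_cycle V E A vs ss \<longleftrightarrow> vs \<noteq> [] \<and> length ss = length vs \<and> distinct vs \<and> distinct ss
     \<and> set vs \<subseteq> V
     \<and> (\<forall>i < length vs. step_ok E A (ss ! i) (vs ! i) (vs ! ((i + 1) mod length vs)))"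

definition has_cycle_of_length :: "'a set \<Rightarrow> 'a set set \<Rightarrow> ('a \<times> 'a) set \<Rightarrow> nat \<Rightarrow> bool" where
  "has_cycle_of_length V E A k \<longleftrightarrow> (\<exists>vs ss. is_cycle V E A vs ss \<and> length vs = k)"

definition has_girth :: "'a set \<Rightarrow> 'a set set \<Rightarrow> ('a \<times> 'a) set \<Rightarrow> nat \<Rightarrow> bool" where
  "has_girth V E A g \<longleftrightarrow> has_cycle_of_length V E A g \<and> (\<forall>k. has_cycle_of_length V E A k \<longrightarrow> g \<le> k)"

definition mixed_zrg :: "'a set \<Rightarrow> 'a set set \<Rightarrow> ('a \<times> 'a) set \<Rightarrow> nat \<Rightarrow> nat \<Rightarrow> nat \<Rightarrow> bool" where
  "mixed_zrg V E A z r g \<longleftrightarrow> mixed_graph V E A \<and> mixed_regular V E A z r \<and> has_girth V E A g"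

definition Hg_V :: "nat \<Rightarrow> (nat \<times> nat) set" where
  "Hg_V g = {(i, j). i < g \<and> j < g div 2}"

definition Hg_E :: "nat \<Rightarrow> (nat \<times> nat) set set" where
  "Hg_E g = {{(i, j), ((i + 1) mod g, j)} | i j. i < g \<and> j < g div 2}"

definition Hg_A :: "nat \<Rightarrow> ((nat \<times> nat) \<times> (nat \<times> nat)) set" where
  "Hg_A g = {((i, j), (i, j + 1)) | i j. i < g \<and> j + 1 < g div 2}
          \<union> {((i, g div 2 - 1), ((i + g div 2) mod g, 0)) | i. i < g}"

end

theory Submission
  imports Defs
begin



definition dI :: "nat \<Rightarrow> nat\<times>nat \<Rightarrow> nat\<times>nat \<Rightarrow> (nat\<times>nat) step \<Rightarrow> int" where
 "dI g u v s = (case s of EdgeStep _ \<Rightarrow> (if fst v = (fst u + 1) mod g then 1 else -1)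
     | ArcStep _ \<Rightarrow> (if snd v = snd u + 1 then 0 else int (g div 2)))"
definition isW :: "nat\<times>nat \<Rightarrow> nat\<times>nat \<Rightarrow> (nat\<times>nat) step \<Rightarrow> int" where
 "isW u v s = (case s of EdgeStep _ \<Rightarrow> 0 | ArcStep _ \<Rightarrow> (if snd v = snd u + 1 then 0 else 1))"
definition isN :: "nat\<times>nat \<Rightarrow> nat\<times>nat \<Rightarrow> (nat\<times>nat) step \<Rightarrow> int" where
 "isN u v s = (case s of EdgeStep _ \<Rightarrow> 0 | ArcStep _ \<Rightarrow> (if snd v = snd u + 1 then 1 else 0))"
definition isE :: "(nat\<times>nat) step \<Rightarrow> int" where
 "isE s = (case s of EdgeStep _ \<Rightarrow> 1 | ArcStep _ \<Rightarrow> 0)"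

lemma step_facts:
  assumes g: "even g" "g \<ge> 4" and st: "step_ok (Hg_E g) (Hg_A g) s u v"
  shows "(int (fst u) + dI g u v s) mod int g = int (fst v)
    \<and> int (snd v) = int (snd u) + isN u v s - (int (g div 2) - 1) * isW u v s
    \<and> isE s + isN u v s + isW u v s = 1 \<and> isE s \<ge> 0 \<and> isN u v s \<ge> 0 \<and> isW u v s \<ge> 0
    \<and> \<bar>dI g u v s - int (g div 2) * isW u v s\<bar> \<le> isE s
    \<and> (isE s = 1 \<longrightarrow> (dI g u v s = 1 \<or> dI g u v s = -1) \<and> snd v = snd u)
    \<and> fst u < g \<and> fst v < g"
proof (cases s)
  case (EdgeStep e)
  with st obtain a b where e: "e = {(a,b),((a+1) mod g, b)}" "a < g" "b < g div 2" and euv: "e = {u,v}"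
    by (auto simp: Hg_E_def)
  from e euv have "(u = (a,b) \<and> v = ((a+1) mod g, b)) \<or> (u = ((a+1) mod g, b) \<and> v = (a,b))"
    by (auto simp: doubleton_eq_iff)
  then show ?thesis
  proof
    assume h: "u = (a,b) \<and> v = ((a+1) mod g, b)"
    have "(int a + 1) mod int g = int ((a+1) mod g)" by (metis of_nat_1 of_nat_add zmod_int)
    then show ?thesis using h e g by (auto simp: dI_def isW_def isN_def isE_def EdgeStep)
  next
    assume h: "u = ((a+1) mod g, b) \<and> v = (a,b)"
    have ne: "a \<noteq> ((a+1) mod g + 1) mod g"
    proof (cases "a + 1 < g")
      case True
      then have "(a+1) mod g = a+1" by simp
      moreover have "(a+2) mod g \<noteq> a"
      proof (cases "a+2 < g")
        case True then show ?thesis by simp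
      next
        case False
        then have "(a+2) mod g = (a + 2 - g) mod g" by (simp add: le_mod_geq)
        also have "\<dots> = a + 2 - g" using e g False by simp
        finally have "(a+2) mod g = a + 2 - g" .
        then show ?thesis using False g by simp
      qed
      ultimately show ?thesis by (simp add: add.assoc)
    next
      case False then have "a = g - 1" using e by simp
      then show ?thesis using g by simp
    qed
    have m: "(int ((a+1) mod g) - 1) mod int g = int a"
    proof (cases "a + 1 < g")
      case True then show ?thesis using e by simp
    next
      case False then have "a = g - 1" using e by simp
      then show ?thesis using g by (simp add: of_nat_diff zmod_zminus1_eq_if)
    qed
    show ?thesis using h e g ne m by (auto simp: dI_def isW_def isN_def isE_def EdgeStep)
  qed
next
  case (ArcStep p)
  with st have p: "p \<in> Hg_A g" "p = (u,v)" by auto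
  then consider (n) a b where "u = (a,b)" "v = (a, b+1)" "a < g" "b + 1 < g div 2"
    | (w) a where "u = (a, g div 2 - 1)" "v = ((a + g div 2) mod g, 0)" "a < g"
    by (auto simp: Hg_A_def)
  then show ?thesis
  proof cases
    case n then show ?thesis by (auto simp: dI_def isW_def isN_def isE_def ArcStep)
  next
    case w
    have "g div 2 \<ge> 2" using g by auto
    with w g show ?thesis by (auto simp: dI_def isW_def isN_def isE_def ArcStep zmod_int of_nat_diff)
  qed
qed



lemma rot_sum:
  fixes f :: "nat \<Rightarrow> int"
  assumes "L > 0"
  shows "(\<Sum>i<L. f ((i+1) mod L)) = (\<Sum>i<L. f i)"
proof -
  obtain m where L: "L = Suc m" using assms by (cases L) auto
  have "(\<Sum>i<Suc m. f ((i+1) mod Suc m)) = (\<Sum>i<m. f ((i+1) mod Suc m)) + f 0"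
    by (simp add: sum.lessThan_Suc)
  also have "(\<Sum>i<m. f ((i+1) mod Suc m)) = (\<Sum>i<m. f (Suc i))"
    by (rule sum.cong) auto
  also have "(\<Sum>i<m. f (Suc i)) + f 0 = (\<Sum>i<Suc m. f i)"
    by (subst sum.lessThan_Suc_shift) simp
  finally show ?thesis using L by simp
qed

lemma arith_W:
  fixes h SE SN SW SD L :: int
  assumes "h \<ge> 2" "SE \<ge> 0" "SN \<ge> 0" "SW \<ge> 0" "SE + SN + SW = L" "SN = (h-1)*SW"
    "\<bar>SD - h*SW\<bar> \<le> SE" "SD mod (2*h) = 0" "L < 2*h"
  shows "SW = 0"
proof (rule ccontr)
  assume "SW \<noteq> 0"
  then consider "SW = 1" | "SW \<ge> 2" using assms by linarith
  then show False
  proof cases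
    case 2
    have "SN + SW = h * SW" using assms by (simp add: algebra_simps)
    moreover have "h * SW \<ge> h * 2" using 2 assms by (intro mult_left_mono) auto
    ultimately show False using assms by linarith
  next
    case 1
    then have "SE = L - h" using assms by simp
    then have "0 < SD" "SD < 2*h" using assms 1 by auto
    moreover obtain k where "SD = 2*h*k" using assms(8) by (metis dvd_def mod_0_imp_dvd)
    ultimately show False
      by (smt (verit, best) mult_le_cancel_left1 mult_pos_neg mult_nonneg_nonpos)
  qed
qed



lemma cycle_long:
  assumes g: "even g" "g \<ge> 4" and cyc: "is_cycle (Hg_V g) (Hg_E g) (Hg_A g) vs ss"
  shows "g \<le> length vs"
proof (rule ccontr)
  assume short: "\<not> g \<le> length vs"
  define L where "L = length vs"
  define h where "h = g div 2"
  have L0: "L > 0" using cyc by (auto simp: is_cycle_def L_def)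
  have Lg: "L < g" using short L_def by simp
  have gh: "g = 2*h" "h \<ge> 2" using g h_def by auto
  define u where "u i = vs ! i" for i
  define v where "v i = vs ! ((i+1) mod L)" for i
  define s where "s i = ss ! i" for i
  define D where "D i = dI g (u i) (v i) (s i)" for i
  define W where "W i = isW (u i) (v i) (s i)" for i
  define N where "N i = isN (u i) (v i) (s i)" for i
  define E where "E i = isE (s i)" for i
  have stok: "step_ok (Hg_E g) (Hg_A g) (s i) (u i) (v i)" if "i < L" for i
    using cyc that unfolding is_cycle_def u_def v_def s_def L_def by blast
  have SF: "(int (fst (u i)) + D i) mod int g = int (fst (v i))
    \<and> int (snd (v i)) = int (snd (u i)) + N i - (int h - 1) * W i
    \<and> E i + N i + W i = 1 \<and> E i \<ge> 0 \<and> N i \<ge> 0 \<and> W i \<ge> 0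
    \<and> \<bar>D i - int h * W i\<bar> \<le> E i
    \<and> (E i = 1 \<longrightarrow> (D i = 1 \<or> D i = -1) \<and> snd (v i) = snd (u i))
    \<and> fst (u i) < g \<and> fst (v i) < g" if "i < L" for i
    unfolding D_def W_def N_def E_def h_def by (rule step_facts[OF g stok[OF that]])
  have SFm: "(int (fst (u i)) + D i) mod int g = int (fst (v i))" if "i < L" for i using SF[OF that] by blast
  have SFj: "int (snd (v i)) = int (snd (u i)) + N i - (int h - 1) * W i" if "i < L" for i using SF[OF that] by blast
  have SF1: "E i + N i + W i = 1" if "i < L" for i using SF[OF that] by blast
  have SFE: "E i \<ge> 0" if "i < L" for i using SF[OF that] by blast
  have SFN: "N i \<ge> 0" if "i < L" for i using SF[OF that] by blast
  have SFW: "W i \<ge> 0" if "i < L" for i using SF[OF that] by blast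
  have SFa: "\<bar>D i - int h * W i\<bar> \<le> E i" if "i < L" for i using SF[OF that] by blast
  have SFe: "E i = 1 \<Longrightarrow> (D i = 1 \<or> D i = -1) \<and> snd (v i) = snd (u i)" if "i < L" for i using SF[OF that] by blast
  have SFu: "fst (u i) < g" if "i < L" for i using SF[OF that] by blast
  have SFv: "fst (v i) < g" if "i < L" for i using SF[OF that] by blast
  have rotv: "(\<Sum>i<L. f (v i)) = (\<Sum>i<L. f (u i))" for f :: "nat\<times>nat \<Rightarrow> int"
    using rot_sum[OF L0, of "\<lambda>k. f (vs ! k)"] by (simp add: u_def v_def)
  have sumJ: "(\<Sum>i<L. N i - (int h - 1) * W i) = 0"
  proof -
    have "(\<Sum>i<L. N i - (int h - 1) * W i) = (\<Sum>i<L. int (snd (v i)) - int (snd (u i)))"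
      by (rule sum.cong) (use SFj in auto)
    also have "\<dots> = 0" using rotv[of "\<lambda>x. int (snd x)"] by (simp add: sum_subtractf)
    finally show ?thesis .
  qed
  have sumI: "(\<Sum>i<L. D i) mod int g = 0"
  proof -
    have "(\<Sum>i<L. D i) mod int g = (\<Sum>i<L. D i mod int g) mod int g" by (simp add: mod_sum_eq)
    also have "(\<Sum>i<L. D i mod int g) = (\<Sum>i<L. (int (fst (v i)) - int (fst (u i))) mod int g)"
    proof (rule sum.cong)
      fix i assume "i \<in> {..<L}"
      then have "(int (fst (u i)) + D i) mod int g = int (fst (v i))" using SFm by auto
      then have "(int (fst (v i)) - int (fst (u i))) mod int g = ((int (fst (u i)) + D i) - int (fst (u i))) mod int g"
        by (metis mod_diff_left_eq)
      then show "D i mod int g = (int (fst (v i)) - int (fst (u i))) mod int g" by simp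
    qed simp
    also have "(\<Sum>i<L. (int (fst (v i)) - int (fst (u i))) mod int g) mod int g
       = (\<Sum>i<L. (int (fst (v i)) - int (fst (u i)))) mod int g" by (simp add: mod_sum_eq)
    also have "(\<Sum>i<L. (int (fst (v i)) - int (fst (u i)))) = 0"
      using rotv[of "\<lambda>x. int (fst x)"] by (simp add: sum_subtractf)
    finally show ?thesis by simp
  qed
  have cnt: "(\<Sum>i<L. E i) + (\<Sum>i<L. N i) + (\<Sum>i<L. W i) = int L"
  proof -
    have "(\<Sum>i<L. E i) + (\<Sum>i<L. N i) + (\<Sum>i<L. W i) = (\<Sum>i<L. E i + N i + W i)"
      by (simp add: sum.distrib)
    also have "\<dots> = (\<Sum>i<L. 1)" by (rule sum.cong) (use SF1 in auto)
    finally show ?thesis by simp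
  qed
  have SNW: "(\<Sum>i<L. N i) = (int h - 1) * (\<Sum>i<L. W i)"
    using sumJ by (simp add: sum_subtractf sum_distrib_left)
  have absb: "\<bar>(\<Sum>i<L. D i) - int h * (\<Sum>i<L. W i)\<bar> \<le> (\<Sum>i<L. E i)"
  proof -
    have "(\<Sum>i<L. D i) - int h * (\<Sum>i<L. W i) = (\<Sum>i<L. D i - int h * W i)"
      by (simp add: sum_subtractf sum_distrib_left)
    also have "\<bar>\<dots>\<bar> \<le> (\<Sum>i<L. \<bar>D i - int h * W i\<bar>)" by (rule sum_abs)
    also have "\<dots> \<le> (\<Sum>i<L. E i)" by (rule sum_mono) (use SFa in auto)
    finally show ?thesis .
  qed
  have SW0: "(\<Sum>i<L. W i) = 0"
  proof -
    have nE: "(\<Sum>i<L. E i) \<ge> 0" by (rule sum_nonneg) (use SFE in auto)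
    have nN: "(\<Sum>i<L. N i) \<ge> 0" by (rule sum_nonneg) (use SFN in auto)
    have nW: "(\<Sum>i<L. W i) \<ge> 0" by (rule sum_nonneg) (use SFW in auto)
    have h2: "int h \<ge> 2" using gh by simp
    have md: "(\<Sum>i<L. D i) mod (2 * int h) = 0" using sumI gh by simp
    have lt: "int L < 2 * int h" using Lg gh by simp
    show ?thesis by (rule arith_W[OF h2 nE nN nW cnt SNW absb md lt])
  qed
  then have SN0: "(\<Sum>i<L. N i) = 0" using SNW by simp
  have allE: "\<And>i. i < L \<Longrightarrow> E i = 1"
  proof -
    have "(\<Sum>i<L. 1 - E i) = int L - (\<Sum>i<L. E i)" by (simp add: sum_subtractf)
    then have "(\<Sum>i<L. 1 - E i) = 0" using cnt SW0 SN0 by linarith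
    moreover have "\<forall>i\<in>{..<L}. 0 \<le> 1 - E i"
    proof
      fix i assume "i \<in> {..<L}" then have "i < L" by simp
      from SF1[OF this] SFN[OF this] SFW[OF this] show "0 \<le> 1 - E i" by linarith
    qed
    ultimately have "\<forall>i\<in>{..<L}. 1 - E i = 0" using sum_nonneg_eq_0_iff[of "{..<L}" "\<lambda>i. 1 - E i"] by simp
    then show "\<And>i. i < L \<Longrightarrow> E i = 1" by auto
  qed
  have Dpm: "\<And>i. i < L \<Longrightarrow> (D i = 1 \<or> D i = -1) \<and> snd (v i) = snd (u i)"
    using SFe allE by blast
  have SD0: "(\<Sum>i<L. D i) = 0"
  proof -
    have "W i = 0" if "i < L" for i using SF1[OF that] SFN[OF that] SFW[OF that] allE[OF that] by linarith
    then have "\<bar>\<Sum>i<L. D i\<bar> \<le> int L" using absb cnt SW0 SN0 by simp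
    then have "\<bar>\<Sum>i<L. D i\<bar> < int g" using Lg by simp
    moreover obtain k where "(\<Sum>i<L. D i) = int g * k" using sumI by (metis dvd_def mod_0_imp_dvd)
    moreover have "k = 0"
    proof (rule ccontr)
      assume "k \<noteq> 0"
      then have "\<bar>k\<bar> \<ge> 1" by simp
      then have "int g * \<bar>k\<bar> \<ge> int g * 1" by (intro mult_left_mono) auto
      then have "\<bar>int g * k\<bar> \<ge> int g" by (simp add: abs_mult)
      with calculation show False by simp
    qed
    ultimately show ?thesis by simp
  qed
  have Dpm1: "D i = 1 \<or> D i = -1" if "i < L" for i using Dpm[OF that] by blast
  have rowc: "snd (v i) = snd (u i)" if "i < L" for i using Dpm[OF that] by blast
  have dvs: "distinct vs" "distinct ss" "length ss = L" using cyc by (auto simp: is_cycle_def L_def)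
  show False
  proof (cases "L = 2")
    case True
    have "E 0 = 1" "E 1 = 1" using allE True by auto
    then obtain e0 e1 where se: "s 0 = EdgeStep e0" "s 1 = EdgeStep e1"
      by (auto simp: E_def isE_def split: step.splits)
    have "step_ok (Hg_E g) (Hg_A g) (s 0) (u 0) (v 0)" "step_ok (Hg_E g) (Hg_A g) (s 1) (u 1) (v 1)"
      using stok True by auto
    with se have "e0 = {u 0, v 0}" "e1 = {u 1, v 1}" by auto
    moreover have "u 0 = v 1" "v 0 = u 1" using True by (simp_all add: u_def v_def)
    ultimately have "e0 = e1" by (simp add: insert_commute)
    then have "ss ! 0 = ss ! 1" using se by (simp add: s_def)
    then show False using dvs True nth_eq_iff_index_eq[of ss 0 1] by simp
  next
    case False
    define x where "x k = int (fst (vs!0)) + (\<Sum>i<k. D i)" for k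
    have xm: "x k mod int g = int (fst (vs!k))" if "k < L" for k
      using that
    proof (induction k)
      case 0
      have "fst (vs!0) < g" using SFu[OF L0] by (simp add: u_def)
      then show ?case by (simp add: x_def)
    next
      case (Suc k)
      then have kL: "k < L" by simp
      have "x (Suc k) = x k + D k" by (simp add: x_def)
      then have "x (Suc k) mod int g = (x k mod int g + D k) mod int g" by (simp add: mod_add_left_eq)
      also have "\<dots> = (int (fst (u k)) + D k) mod int g" using Suc kL by (simp add: u_def)
      also have "\<dots> = int (fst (v k))" using SFm[OF kL] .
      also have "v k = vs ! Suc k" using Suc by (simp add: v_def)
      finally show ?case .
    qed
    have xr: "snd (vs!k) = snd (vs!0)" if "k < L" for k
      using that
    proof (induction k)
      case (Suc k)
      then have kL: "k < L" by simp
      have "v k = vs ! Suc k" using Suc by (simp add: v_def)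
      then show ?case using rowc[OF kL] Suc by (simp add: u_def)
    qed simp
    have xc: "x ((i+1) mod L) = x i + D i" if "i < L" for i
    proof (cases "i + 1 < L")
      case True then show ?thesis by (simp add: x_def)
    next
      case False
      then have "i + 1 = L" using that by simp
      then have "x ((i+1) mod L) = x 0" by simp
      also have "x 0 = x L" using SD0 by (simp add: x_def)
      also have "x L = x i + D i" using \<open>i + 1 = L\<close>[symmetric] by (simp add: x_def)
      finally show ?thesis .
    qed
    have fin: "finite (x ` {..<L})" "x ` {..<L} \<noteq> {}" using L0 by auto
    then obtain k where k: "k < L" "x k = Max (x ` {..<L})" using Max_in[OF fin] by (metis (no_types, lifting) imageE lessThan_iff)
    have kmax: "x i \<le> x k" if "i < L" for i using k fin that by simp
    define p where "p = (k + L - 1) mod L"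
    have pk1: "p = k - 1" if "k \<noteq> 0"
    proof -
      have e: "k + L - 1 = (k - 1) + L" using that by simp
      have "p = ((k - 1) + L) mod L" unfolding p_def e ..
      also have "\<dots> = (k - 1) mod L" by (rule mod_add_self2)
      also have "\<dots> = k - 1" using k(1) by simp
      finally show ?thesis .
    qed
    have pL: "p < L" using L0 by (simp add: p_def)
    have pk: "(p+1) mod L = k"
    proof (cases "k = 0")
      case True then show ?thesis using L0 by (simp add: p_def)
    next
      case False then have "p = k - 1" by (rule pk1)
      then show ?thesis using False k by simp
    qed
    define q where "q = (k+1) mod L"
    have qL: "q < L" using L0 by (simp add: q_def)
    have Dk: "D k = -1" using xc[OF k(1)] kmax[OF qL] Dpm1[OF k(1)] by (simp add: q_def)
    have Dp: "D p = 1" using xc[OF pL] kmax[OF pL] Dpm1[OF pL] pk by auto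
    have pnk: "p \<noteq> k" using Dk Dp by auto
    have "x q = x p" using xc[OF k(1)] xc[OF pL] pk Dk Dp by (simp add: q_def)
    then have "int (fst (vs!q)) = int (fst (vs!p))" using xm[OF qL] xm[OF pL] by simp
    moreover have "snd (vs!q) = snd (vs!p)" using xr[OF qL] xr[OF pL] by simp
    ultimately have "vs ! q = vs ! p" by (simp add: prod_eq_iff)
    then have "q = p" using dvs(1) qL pL nth_eq_iff_index_eq[of vs q p] by (simp add: L_def)
    have L3: "L \<ge> 3"
    proof -
      have "L \<noteq> 1" using pnk pL k by auto
      then show ?thesis using False L0 by linarith
    qed
    show False
    proof (cases "k = 0")
      case True
      then have "p = L - 1" using L0 by (simp add: p_def)
      moreover have "q = 1" using True L3 by (simp add: q_def)
      ultimately show False using \<open>q = p\<close> L3 by simp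
    next
      case kn: False
      then have "p = k - 1" by (rule pk1)
      moreover have "q = (if k + 1 = L then 0 else k + 1)" using k by (auto simp: q_def)
      ultimately show False using \<open>q = p\<close> L3 kn by (auto split: if_splits)
    qed
  qed
qed



lemma succ_ne: fixes g :: nat assumes "g \<ge> 3" "i < g" shows "(i + 1) mod g \<noteq> i"
proof (cases "i + 1 < g")
  case False then have "i + 1 = g" using assms by simp
  then show ?thesis using assms by simp
qed (use assms in simp)

lemma V_eq: "Hg_V g = {..<g} \<times> {..<g div 2}" by (auto simp: Hg_V_def)

lemma card_V: "card (Hg_V g) = g * (g div 2)"
  by (simp add: V_eq card_cartesian_product)

lemma mg: assumes "even g" "g \<ge> 4" shows "mixed_graph (Hg_V g) (Hg_E g) (Hg_A g)"
proof -
  have "finite (Hg_V g)" by (simp add: V_eq)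
  moreover have "\<forall>e\<in>Hg_E g. e \<subseteq> Hg_V g \<and> card e = 2"
  proof
    fix e assume "e \<in> Hg_E g"
    then obtain i j where e: "e = {(i, j), ((i + 1) mod g, j)}" "i < g" "j < g div 2" by (auto simp: Hg_E_def)
    have "(i + 1) mod g \<noteq> i" using succ_ne assms e by simp
    then show "e \<subseteq> Hg_V g \<and> card e = 2" using e assms by (auto simp: Hg_V_def)
  qed
  moreover have "\<forall>(u,v)\<in>Hg_A g. u \<in> Hg_V g \<and> v \<in> Hg_V g \<and> u \<noteq> v"
    using assms by (auto simp: Hg_A_def Hg_V_def)
  ultimately show ?thesis by (simp add: mixed_graph_def)
qed



lemma succ_eq: fixes a g :: nat assumes "a < g" shows "(a+1) mod g = (if a + 1 = g then 0 else a+1)"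
  using assms by auto

lemma pred_eq: fixes i g :: nat assumes "i < g" shows "(i + g - 1) mod g = (if i = 0 then g - 1 else i - 1)"
proof (cases "i = 0")
  case False
  have e: "i + g - 1 = (i - 1) + g" using False by simp
  have "(i + g - 1) mod g = ((i - 1) + g) mod g" unfolding e ..
  also have "\<dots> = (i - 1) mod g" by (rule mod_add_self2)
  finally show ?thesis using False assms by simp
qed (use assms in simp)

lemma half_eq: fixes x h :: nat assumes "x < 2*h" shows "(x + h) mod (2*h) = (if x < h then x + h else x - h)"
proof (cases "x < h")
  case False
  have e: "x + h = (x - h) + 2*h" using False by simp
  have "(x + h) mod (2*h) = ((x - h) + 2*h) mod (2*h)" unfolding e ..
  also have "\<dots> = (x - h) mod (2*h)" by (rule mod_add_self2)
  finally show ?thesis using False assms by simp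
qed (use assms in simp)

lemma out: fixes g h i j :: nat assumes w: "w = (i,j)" "i < g" "j < h" and gh: "g = 2*h" "h \<ge> 2"
  shows "{x. (w, x) \<in> Hg_A g} = {if j + 1 < h then (i, j+1) else ((i + h) mod g, 0)}"
proof (cases "j + 1 < h")
  case True then show ?thesis using w gh by (auto simp: Hg_A_def)
next
  case False then have "j = h - 1" using w by simp
  then show ?thesis using w gh False by (auto simp: Hg_A_def)
qed
lemma inn1: fixes g h i j :: nat assumes w: "w = (i,j)" "i < g" "j < h" and gh: "g = 2*h" "h \<ge> 2"
  and j: "j \<ge> 1"
  shows "{x. (x, w) \<in> Hg_A g} = {(i, j-1)}"
proof -
  obtain j' where j': "j = j' + 1" using j by (metis add.commute le_Suc_ex)
  show ?thesis using w gh j' by (auto simp: Hg_A_def)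
qed
lemma inn0: fixes g h i :: nat assumes w: "w = (i,0)" "i < g" and gh: "g = 2*h" "h \<ge> 2"
  and key: "\<And>a. a < g \<Longrightarrow> ((a + h) mod g = i) = (a = (i + h) mod g)"
  shows "{x. (x, w) \<in> Hg_A g} = {((i + h) mod g, h - 1)}"
proof (rule set_eqI)
  fix x
  have "x \<in> {x. (x, w) \<in> Hg_A g} \<longleftrightarrow> (\<exists>a. x = (a, h - 1) \<and> a < g \<and> (a + h) mod g = i)"
    using w gh by (auto simp: Hg_A_def)
  also have "\<dots> \<longleftrightarrow> x = ((i + h) mod g, h - 1)" using key gh by auto
  finally show "x \<in> {x. (x, w) \<in> Hg_A g} \<longleftrightarrow> x \<in> {((i + h) mod g, h - 1)}" by simp
qed
lemma regular: assumes "even g" "g \<ge> 4" shows "mixed_regular (Hg_V g) (Hg_E g) (Hg_A g) 1 2"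
  unfolding mixed_regular_def
proof
  fix w assume "w \<in> Hg_V g"
  then obtain i j where w: "w = (i,j)" "i < g" "j < g div 2" by (auto simp: Hg_V_def)
  define h where "h = g div 2"
  have gh: "g = 2*h" "h \<ge> 2" using assms h_def by auto
  have out: "card {x. (w, x) \<in> Hg_A g} = 1"
    using out[OF w(1,2) _ gh] w(3) h_def by simp
  have inn: "card {x. (x, w) \<in> Hg_A g} = 1"
  proof (cases "j \<ge> 1")
    case True then show ?thesis using inn1[OF w(1,2) _ gh] w(3) h_def by simp
  next
    case False
    then have j0: "w = (i, 0)" using w by simp
    have key: "((a + h) mod g = i) = (a = (i + h) mod g)" if "a < g" for a
      using half_eq[of a h] half_eq[of i h] that w gh by auto
    show ?thesis using inn0[OF j0 w(2) gh key] by simp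
  qed
  define e1 where "e1 = {(i, j), ((i + 1) mod g, j)}"
  define e2 where "e2 = {((i + g - 1) mod g, j), (i, j)}"
  have pr: "((a + 1) mod g = i) = (a = (i + g - 1) mod g)" if "a < g" for a
    using succ_eq[OF that] pred_eq[OF w(2)] that w gh by auto
  have pl: "((i + g - 1) mod g + 1) mod g = i"
    using pr[of "(i + g - 1) mod g"] gh by simp
  have e2': "e2 = {((i + g - 1) mod g, j), (((i + g - 1) mod g + 1) mod g, j)}"
    unfolding e2_def pl by auto
  have edges: "{e \<in> Hg_E g. w \<in> e} = {e1, e2}"
  proof (rule set_eqI)
    fix e
    show "e \<in> {e \<in> Hg_E g. w \<in> e} \<longleftrightarrow> e \<in> {e1, e2}"
    proof
      assume "e \<in> {e \<in> Hg_E g. w \<in> e}"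
      then obtain a b where e: "e = {(a, b), ((a + 1) mod g, b)}" "a < g" "b < g div 2" "w \<in> e"
        by (auto simp: Hg_E_def)
      then have "(a = i \<and> b = j) \<or> ((a+1) mod g = i \<and> b = j)" using w by auto
      then show "e \<in> {e1, e2}"
      proof
        assume "a = i \<and> b = j" then show ?thesis using e by (simp add: e1_def)
      next
        assume "(a+1) mod g = i \<and> b = j"
        then have "a = (i + g - 1) mod g" "b = j" using pr e by auto
        then have "e = e2" unfolding e2' using e by simp
        then show ?thesis by simp
      qed
    next
      assume "e \<in> {e1, e2}"
      moreover have "e1 \<in> Hg_E g" using w by (auto simp: Hg_E_def e1_def)
      moreover have "e2 \<in> Hg_E g"
      proof -
        have "(i + g - 1) mod g < g" using gh by simp
        then show ?thesis unfolding e2' Hg_E_def using w(3) by blast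
      qed
      ultimately show "e \<in> {e \<in> Hg_E g. w \<in> e}" using w by (auto simp: e1_def e2_def)
    qed
  qed
  have ne: "e1 \<noteq> e2"
  proof
    assume "e1 = e2"
    moreover have "(i + 1) mod g \<noteq> i" using succ_ne[of g i] w gh by simp
    ultimately have "((i + 1) mod g, j) = ((i + g - 1) mod g, j)" unfolding e1_def e2_def
      by (auto simp: doubleton_eq_iff)
    then have "(i + 1) mod g = (i + g - 1) mod g" by simp
    then have "(((i + 1) mod g) + 1) mod g = i" using pl by simp
    then show False using succ_eq[of i g] succ_eq[of "i+1" g] w gh by (auto split: if_splits)
  qed
  show "card {x. (w, x) \<in> Hg_A g} = 1 \<and> card {x. (x, w) \<in> Hg_A g} = 1 \<and> card {e \<in> Hg_E g. w \<in> e} = 2"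
    using out inn edges ne by simp
qed



lemma has_g: assumes "even g" "g \<ge> 4" shows "has_cycle_of_length (Hg_V g) (Hg_E g) (Hg_A g) g"
proof -
  define vs where "vs = map (\<lambda>i. (i, 0::nat)) [0..<g]"
  define ss where "ss = map (\<lambda>i. EdgeStep {(i, 0::nat), ((i + 1) mod g, 0)}) [0..<g]"
  have len: "length vs = g" "length ss = g" by (simp_all add: vs_def ss_def)
  have dv: "distinct vs" by (simp add: vs_def distinct_map inj_on_def)
  have ds: "distinct ss"
    unfolding ss_def distinct_map
  proof
    show "distinct [0..<g]" by simp
    show "inj_on (\<lambda>i. EdgeStep {(i, 0::nat), ((i + 1) mod g, 0)}) (set [0..<g])"
    proof (rule inj_onI)
      fix a b assume ab: "a \<in> set [0..<g]" "b \<in> set [0..<g]"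
        and eq: "EdgeStep {(a, 0::nat), ((a + 1) mod g, 0)} = EdgeStep {(b, 0), ((b + 1) mod g, 0)}"
      from eq have "{(a, 0::nat), ((a + 1) mod g, 0)} = {(b, 0), ((b + 1) mod g, 0)}" by simp
      then have "a = b \<or> (a = (b + 1) mod g \<and> (a + 1) mod g = b)" by (auto simp: doubleton_eq_iff)
      then show "a = b"
      proof
        assume h: "a = (b + 1) mod g \<and> (a + 1) mod g = b"
        then show "a = b" using succ_eq[of a g] succ_eq[of b g] ab assms by (auto split: if_splits)
      qed
    qed
  qed
  have h1: "g div 2 \<ge> 1" using assms by auto
  have sv: "set vs \<subseteq> Hg_V g" using h1 by (auto simp: vs_def Hg_V_def)
  have st: "step_ok (Hg_E g) (Hg_A g) (ss ! i) (vs ! i) (vs ! ((i + 1) mod length vs))" if "i < length vs" for i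
  proof -
    have ig: "i < g" using that len by simp
    have "(i + 1) mod g < g" using assms by simp
    then have "vs ! ((i + 1) mod length vs) = ((i + 1) mod g, 0)" by (simp add: vs_def len(1)[unfolded vs_def])
    moreover have "vs ! i = (i, 0)" "ss ! i = EdgeStep {(i, 0), ((i + 1) mod g, 0)}"
      using ig by (simp_all add: vs_def ss_def)
    moreover have "{(i, 0::nat), ((i + 1) mod g, 0)} \<in> Hg_E g" unfolding Hg_E_def
      using ig h1 by (intro CollectI exI[of _ i] exI[of _ "0::nat"]) simp
    ultimately show ?thesis by simp
  qed
  have "is_cycle (Hg_V g) (Hg_E g) (Hg_A g) vs ss"
    unfolding is_cycle_def using len dv ds sv st assms by auto
  then show ?thesis unfolding has_cycle_of_length_def using len by blast
qed

theorem lemma6: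
  fixes g :: nat
  assumes "even g" and "g \<ge> 4"
  shows "mixed_zrg (Hg_V g) (Hg_E g) (Hg_A g) 1 2 g \<and> card (Hg_V g) = g\<^sup>2 div 2"
proof
  have "has_girth (Hg_V g) (Hg_E g) (Hg_A g) g"
    unfolding has_girth_def using has_g[OF assms] cycle_long[OF assms]
    by (auto simp: has_cycle_of_length_def)
  then show "mixed_zrg (Hg_V g) (Hg_E g) (Hg_A g) 1 2 g"
    unfolding mixed_zrg_def using mg[OF assms] regular[OF assms] by blast
  obtain m where "g = 2*m" using assms(1) by blast
  then show "card (Hg_V g) = g\<^sup>2 div 2" by (simp add: card_V power2_eq_square)
qed


end
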